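(* Let $X$ be an infinite h-homogeneous zero-dimensional compact Hausdorff space, let $\upsilon\in\Phi(X)$ and let $\tilde\alpha=\{A_1,\dots,A_m\}$ be a finite partition of $X$ into nonempty clopen sets. Then the relation $<_{\upsilon}$ on $\tilde\alpha$ defined by $A_i<_\upsilon A_j \iff (A_i)_\upsilon\subseteq (A_j)_\upsilon$ is a linear order on $\tilde\alpha$. Moreover, if $A_{i_1}<_\upsilon A_{i_2}<_\upsilon\dots<_\upsilon A_{i_m}$ is this ordering, then for each $k=1,\dots,m$ there is a point $x_k\in A_{i_k}$ with $(A_{i_k})_\upsilon\setminus (A_{i_1}\cup\dots\cup A_{i_{k-1}})^\upsilon=\{x_k\}$ (for $k=1$ the union is empty and the set subtracted is $\emptyset$).
   Context: h-homogeneous: every nonempty clopen subset of $X$ is homeomorphic to $X$. $\Phi(X)$ is the set of maximal chains (maximal families of nonempty closed subsets of $X$ totally ordered by inclusion). For $\upsilon\in\Phi(X)$ and a closed $D\subset X$: if $D\ne\emptyset$, $D_\upsilon=\bigcap\{A\in\upsilon: A\cap D\neq\emptyset\}$ (the least element of $\upsilon$ meeting $D$); and $D^\upsilon=\overline{\bigcup\{A\in\upsilon: A\subset D\}}$ (the largest element of $\upsilon$ contained in $D$ when the root of $\upsilon$ lies in $D$). *)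

theory Defs
  imports "HOL-Analysis.Analysis"
begin

definition h_homogeneous :: "'a topology \<Rightarrow> bool" where
  "h_homogeneous X \<longleftrightarrow>
     (\<forall>C. closedin X C \<and> openin X C \<and> C \<noteq> {} \<longrightarrow> subtopology X C homeomorphic_space X)"

definition closed_chain :: "'a topology \<Rightarrow> 'a set set \<Rightarrow> bool" where
  "closed_chain X c \<longleftrightarrow>
     (\<forall>A\<in>c. closedin X A \<and> A \<noteq> {}) \<and> (\<forall>A\<in>c. \<forall>B\<in>c. A \<subseteq> B \<or> B \<subseteq> A)"

definition max_chains :: "'a topology \<Rightarrow> 'a set set set" where
  "max_chains X = {c. closed_chain X c \<and> (\<forall>d. closed_chain X d \<and> c \<subseteq> d \<longrightarrow> d = c)}"

definition chain_lower :: "'a set set \<Rightarrow> 'a set \<Rightarrow> 'a set" where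
  "chain_lower v D = \<Inter>{A\<in>v. A \<inter> D \<noteq> {}}"

definition chain_upper :: "'a topology \<Rightarrow> 'a set set \<Rightarrow> 'a set \<Rightarrow> 'a set" where
  "chain_upper X v D = X closure_of (\<Union>{A\<in>v. A \<subseteq> D})"

definition chain_rel :: "'a set set \<Rightarrow> 'a set set \<Rightarrow> ('a set \<times> 'a set) set" where
  "chain_rel v \<alpha> = {(A, B). A \<in> \<alpha> \<and> B \<in> \<alpha> \<and> chain_lower v A \<subseteq> chain_lower v B}"

end

theory Submission
  imports Defs
begin

lemma mc_closed: "v \<in> max_chains X \<Longrightarrow> E \<in> v \<Longrightarrow> closedin X E \<and> E \<noteq> {}"
  by (auto simp: max_chains_def closed_chain_def)

lemma mc_comp: "v \<in> max_chains X \<Longrightarrow> E \<in> v \<Longrightarrow> F \<in> v \<Longrightarrow> E \<subseteq> F \<or> F \<subseteq> E"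
  by (auto simp: max_chains_def closed_chain_def)

lemma mc_max:
  assumes "v \<in> max_chains X" "closedin X D" "D \<noteq> {}" "\<forall>E\<in>v. E \<subseteq> D \<or> D \<subseteq> E"
  shows "D \<in> v"
proof -
  have "closed_chain X (insert D v)"
    using assms by (auto simp: max_chains_def closed_chain_def)
  then have "insert D v = v" using assms(1) unfolding max_chains_def by blast
  then show ?thesis by blast
qed

lemma mc_top:
  assumes "v \<in> max_chains X" "topspace X \<noteq> {}"
  shows "topspace X \<in> v"
  using mc_max[OF assms(1)] assms(2) mc_closed[OF assms(1)] closedin_subset by blast

lemma finite_chain_min:
  assumes "finite F" "F \<noteq> {}" "\<forall>E\<in>F. \<forall>G\<in>F. E \<subseteq> G \<or> G \<subseteq> E"
  shows "\<exists>C\<in>F. \<forall>E\<in>F. C \<subseteq> E"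
  using assms
proof (induction F rule: finite_ne_induct)
  case (singleton x) then show ?case by blast
next
  case (insert x F)
  then obtain C where "C \<in> F" "\<forall>E\<in>F. C \<subseteq> E" by blast
  with insert.prems show ?case
    by (metis dual_order.trans insert_iff)
qed

lemma lower_sub: "E \<in> v \<Longrightarrow> E \<inter> A \<noteq> {} \<Longrightarrow> chain_lower v A \<subseteq> E"
  by (auto simp: chain_lower_def)

lemma lower_sup:
  assumes "v \<in> max_chains X" "E \<in> v" "E \<inter> A = {}"
  shows "E \<subseteq> chain_lower v A"
proof -
  have "E \<subseteq> C" if "C \<in> v" "C \<inter> A \<noteq> {}" for C
    using mc_comp[OF assms(1) assms(2) that(1)] that assms(3) by blast
  then show ?thesis by (auto simp: chain_lower_def)
qed

lemma lower_meets:
  assumes "v \<in> max_chains X" "compact_space X" "closedin X A" "A \<noteq> {}"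
  shows "chain_lower v A \<inter> A \<noteq> {}"
proof -
  have cA: "compactin X A" using assms closedin_compact_space by blast
  let ?U = "{C\<in>v. C \<inter> A \<noteq> {}}"
  have "A \<inter> \<Inter>?U \<noteq> {}"
  proof -
    have "(\<forall>C\<in>?U. closedin X C)" using mc_closed[OF assms(1)] by blast
    moreover have "A \<inter> \<Inter>\<F> \<noteq> {}" if "finite \<F>" "\<F> \<subseteq> ?U" for \<F>
    proof -
      note fin = that
    show ?thesis proof (cases "\<F> = {}")
      case True then show ?thesis using assms(4) by simp
    next
      case False
      have "\<forall>E\<in>\<F>. \<forall>G\<in>\<F>. E \<subseteq> G \<or> G \<subseteq> E" using fin mc_comp[OF assms(1)] by blast
      then obtain C where "C \<in> \<F>" "\<forall>E\<in>\<F>. C \<subseteq> E" using finite_chain_min fin False by metis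
      then have "\<Inter>\<F> = C" by blast
      then show ?thesis using \<open>C \<in> \<F>\<close> fin by blast
    qed
    qed
    ultimately show ?thesis using cA unfolding compactin_fip by blast
  qed
  then show ?thesis by (auto simp: chain_lower_def)
qed

lemma gap:
  assumes "v \<in> max_chains X" "Hausdorff_space X" "compact_space X" "closedin X A" "A \<noteq> {}"
  defines "L \<equiv> chain_lower v A"
  defines "M \<equiv> X closure_of \<Union>{E\<in>v. E \<inter> A = {}}"
  assumes "x \<in> L - M" "y \<in> L - M"
  shows "x = y"
proof (rule ccontr)
  assume xy: "x \<noteq> y"
  have top: "topspace X \<in> v" using mc_top[OF assms(1)] assms(4,5) closedin_subset by blast
  have "L \<subseteq> topspace X" unfolding L_def using lower_sub[OF top, of A] assms(4,5) closedin_subset by blast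
  then have xt: "x \<in> topspace X" using assms(8) by blast
  have t1: "t1_space X" using assms(2) Hausdorff_imp_t1_space by blast
  define D where "D = M \<union> {x}"
  have cD: "closedin X D" unfolding D_def M_def
    using t1 xt by (metis closedin_Un closedin_closure_of t1_space_closedin_singleton)
  have UM: "\<Union>{E\<in>v. E \<inter> A = {}} \<subseteq> M" unfolding M_def
    by (rule closure_of_subset) (use mc_closed[OF assms(1)] closedin_subset in blast)
  have hML: "M \<subseteq> L"
  proof -
    have "closedin X L" unfolding L_def chain_lower_def
      using mc_closed[OF assms(1)] top assms(4,5) closedin_subset
      by (intro closedin_Inter) blast+
    moreover have "\<Union>{E\<in>v. E \<inter> A = {}} \<subseteq> L" unfolding L_def using lower_sup[OF assms(1)] by blast
    ultimately show ?thesis unfolding M_def by (simp add: closure_of_minimal)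
  qed
  have "\<forall>E\<in>v. E \<subseteq> D \<or> D \<subseteq> E"
  proof
    fix E assume E: "E \<in> v"
    show "E \<subseteq> D \<or> D \<subseteq> E"
    proof (cases "E \<inter> A = {}")
      case True
      then have "E \<subseteq> M" using E UM by blast
      then show ?thesis unfolding D_def by blast
    next
      case False
      then have "L \<subseteq> E" unfolding L_def using lower_sub E by blast
      then show ?thesis unfolding D_def using hML assms(8) by blast
    qed
  qed
  moreover have "D \<noteq> {}" unfolding D_def by blast
  ultimately have "D \<in> v" using mc_max[OF assms(1) cD] by blast
  show False
  proof (cases "D \<inter> A = {}")
    case True
    then have "D \<subseteq> M" using \<open>D \<in> v\<close> UM by blast
    then show False using assms(8) D_def by blast
  next
    case False
    then have "L \<subseteq> D" unfolding L_def using lower_sub \<open>D \<in> v\<close> by blast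
    then show False using assms(9) xy D_def by blast
  qed
qed

lemma key:
  assumes "v \<in> max_chains X" "Hausdorff_space X" "compact_space X" "closedin X A" "openin X A" "A \<noteq> {}"
  shows "\<exists>x. chain_lower v A \<inter> A = {x} \<and>
     chain_lower v A - X closure_of \<Union>{E\<in>v. \<not> chain_lower v A \<subseteq> E} = {x}"
proof -
  let ?L = "chain_lower v A"
  have ne: "?L \<inter> A \<noteq> {}" using lower_meets assms by blast
  then obtain x where x: "x \<in> ?L" "x \<in> A" by blast
  have eqG: "{E\<in>v. \<not> ?L \<subseteq> E} = {E\<in>v. E \<inter> A = {}}"
    using lower_sub ne by blast
  define M where "M = X closure_of \<Union>{E\<in>v. E \<inter> A = {}}"
  have "closedin X (topspace X - A)" using assms(5) by blast
  moreover have "\<Union>{E\<in>v. E \<inter> A = {}} \<subseteq> topspace X - A"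
    using mc_closed[OF assms(1)] closedin_subset by blast
  ultimately have "M \<subseteq> topspace X - A" unfolding M_def by (simp add: closure_of_minimal)
  then have xM: "x \<in> ?L - M" using x by blast
  have uniq: "y = x" if "y \<in> ?L - M" for y
    using gap[OF assms(1,2,3,4,6)] xM that unfolding M_def by blast
  have "?L \<inter> A = {x}" using x uniq \<open>M \<subseteq> topspace X - A\<close> by blast
  moreover have "?L - M = {x}" using xM uniq by blast
  ultimately show ?thesis unfolding eqG M_def by blast
qed

lemma lower_total:
  assumes "v \<in> max_chains X"
  shows "chain_lower v A \<subseteq> chain_lower v B \<or> chain_lower v B \<subseteq> chain_lower v A"
proof (rule ccontr)
  assume "\<not> ?thesis"
  then obtain C where C: "C \<in> v" "C \<inter> B \<noteq> {}" "\<not> chain_lower v A \<subseteq> C"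
    and nb: "\<not> chain_lower v B \<subseteq> chain_lower v A"
    unfolding chain_lower_def by blast
  then have "C \<inter> A = {}" using lower_sub by blast
  then have "C \<subseteq> chain_lower v A" using lower_sup[OF assms C(1)] by blast
  moreover have "chain_lower v B \<subseteq> C" using lower_sub C by blast
  ultimately show False using nb by blast
qed

theorem proposition3p3:
  fixes X :: "'a topology" and v :: "'a set set" and \<alpha> :: "'a set set"
  assumes "infinite (topspace X)"
    and "h_homogeneous X"
    and "X dim_le 0"
    and "compact_space X"
    and "Hausdorff_space X"
    and "v \<in> max_chains X"
    and "finite \<alpha>"
    and "\<forall>A\<in>\<alpha>. A \<noteq> {} \<and> closedin X A \<and> openin X A"
    and "\<forall>A\<in>\<alpha>. \<forall>B\<in>\<alpha>. A \<noteq> B \<longrightarrow> A \<inter> B = {}"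
    and "\<Union>\<alpha> = topspace X"
  shows "linear_order_on \<alpha> (chain_rel v \<alpha>)
    \<and> (\<forall>f. bij_betw f {..<card \<alpha>} \<alpha>
            \<and> (\<forall>i j. i < j \<and> j < card \<alpha> \<longrightarrow> (f i, f j) \<in> chain_rel v \<alpha>)
          \<longrightarrow> (\<forall>k < card \<alpha>. \<exists>x \<in> f k.
                 chain_lower v (f k) - chain_upper X v (\<Union>(f ` {..<k})) = {x}))"
proof
  have K: "\<And>A. A \<in> \<alpha> \<Longrightarrow> \<exists>x. chain_lower v A \<inter> A = {x} \<and>
     chain_lower v A - X closure_of \<Union>{E\<in>v. \<not> chain_lower v A \<subseteq> E} = {x}"
    using key[OF assms(6,5,4)] assms(8) by blast
  have anti: "A = B" if AB: "A \<in> \<alpha>" "B \<in> \<alpha>" "chain_lower v A = chain_lower v B" for A B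
  proof -
    obtain x where x: "chain_lower v A \<inter> A = {x}"
      "chain_lower v A - X closure_of \<Union>{E\<in>v. \<not> chain_lower v A \<subseteq> E} = {x}"
      using K AB(1) by blast
    obtain y where y: "chain_lower v B \<inter> B = {y}"
      "chain_lower v B - X closure_of \<Union>{E\<in>v. \<not> chain_lower v B \<subseteq> E} = {y}"
      using K AB(2) by blast
    have "x = y" using x(2) y(2) AB(3) by simp
    then have "A \<inter> B \<noteq> {}" using x(1) y(1) by blast
    then show ?thesis using assms(9) AB by blast
  qed
  show "linear_order_on \<alpha> (chain_rel v \<alpha>)"
    unfolding linear_order_on_def partial_order_on_def preorder_on_def refl_on_def trans_def
      antisym_def total_on_def chain_rel_def
    using anti lower_total[OF assms(6)] by auto
next
  show "\<forall>f. bij_betw f {..<card \<alpha>} \<alpha>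
            \<and> (\<forall>i j. i < j \<and> j < card \<alpha> \<longrightarrow> (f i, f j) \<in> chain_rel v \<alpha>)
          \<longrightarrow> (\<forall>k < card \<alpha>. \<exists>x \<in> f k.
                 chain_lower v (f k) - chain_upper X v (\<Union>(f ` {..<k})) = {x})"
  proof (intro allI impI)
    fix f k
    assume H: "bij_betw f {..<card \<alpha>} \<alpha>
            \<and> (\<forall>i j. i < j \<and> j < card \<alpha> \<longrightarrow> (f i, f j) \<in> chain_rel v \<alpha>)"
      and k: "k < card \<alpha>"
    have bij: "bij_betw f {..<card \<alpha>} \<alpha>" using H by blast
    have ord: "\<And>i j. i < j \<Longrightarrow> j < card \<alpha> \<Longrightarrow> chain_lower v (f i) \<subseteq> chain_lower v (f j)"
      using H unfolding chain_rel_def by blast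
    have fin: "\<And>i. i < card \<alpha> \<Longrightarrow> f i \<in> \<alpha>" using bij bij_betwE by blast
    have inj: "\<And>i j. i < card \<alpha> \<Longrightarrow> j < card \<alpha> \<Longrightarrow> f i = f j \<Longrightarrow> i = j"
      using bij unfolding bij_betw_def inj_on_def by blast
    have surj: "\<And>B. B \<in> \<alpha> \<Longrightarrow> \<exists>j<card \<alpha>. B = f j"
      using bij unfolding bij_betw_def by auto
    let ?A = "f k"
    let ?L = "chain_lower v ?A"
    define U where "U = \<Union>(f ` {..<k})"
    define M where "M = X closure_of \<Union>{E\<in>v. \<not> ?L \<subseteq> E}"
    have Ap: "?A \<noteq> {}" "closedin X ?A" "openin X ?A" using assms(8) fin[OF k] by auto
    obtain x where x: "?L \<inter> ?A = {x}" "?L - M = {x}"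
      using key[OF assms(6,5,4) Ap(2,3,1)] unfolding M_def by (elim exE conjE) simp
    have disj: "?A \<inter> f i = {}" if "i < k" for i
      proof -
      have "i < card \<alpha>" using that k by simp
      then have "f i \<noteq> f k" using inj k that by fastforce
      then show ?thesis using assms(9) fin k \<open>i < card \<alpha>\<close> by blast
    qed
    have xU: "x \<notin> U" using x(1) disj unfolding U_def by blast
    have cU: "closedin X U" unfolding U_def
      using fin k assms(8) by (intro closedin_Union) auto
    have upU: "chain_upper X v U \<subseteq> U"
      unfolding chain_upper_def using cU by (intro closure_of_minimal) auto
    have GU: "E \<subseteq> U" if E: "E \<in> v" "\<not> ?L \<subseteq> E" for E
    proof
      fix z assume z: "z \<in> E"
      then have "z \<in> topspace X" using mc_closed[OF assms(6) E(1)] closedin_subset by blast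
      then obtain B where "B \<in> \<alpha>" "z \<in> B" using assms(10) by blast
      then obtain j where j: "j < card \<alpha>" "z \<in> f j" using surj by blast
      have "\<not> j \<ge> k"
      proof
        assume "j \<ge> k"
        then have "?L \<subseteq> chain_lower v (f j)" using ord j by (cases "j = k") auto
        moreover have "chain_lower v (f j) \<subseteq> E" using lower_sub[OF E(1)] j z by blast
        ultimately show False using E(2) by blast
      qed
      then show "z \<in> U" unfolding U_def using j by auto
    qed
    have MU: "M \<subseteq> chain_upper X v U"
      unfolding M_def chain_upper_def using GU by (intro closure_of_mono) blast
    have "?L - chain_upper X v U = {x}"
      using x MU upU xU by blast
    then show "\<exists>x \<in> f k. chain_lower v (f k) - chain_upper X v (\<Union>(f ` {..<k})) = {x}"
      using x(1) unfolding U_def by blast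
  qed
qed

end
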